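(* Let $\mathbf a=(a_0,a_1,\ldots)$ be an integer sequence, and let $\mathbf m$ and $\mathbf b$ be its double-ox middle and transformed sequences. Then the exponential generating functions $\mathcal A(x)=\sum a_nx^n/n!$, $\mathcal M(x)=\sum m_nx^n/n!$, $\mathcal B(x)=\sum b_nx^n/n!$ satisfy, as formal power series, $$\mathcal M(x)=\frac{1}{\cos x-\sin x}\,\mathcal A(x),\qquad \mathcal B(x)=\frac{\cos x+\sin x}{\cos x-\sin x}\,\mathcal A(x).$$
   Context: Double-ox transform: given $\mathbf a$, define two triangular arrays $L_{n,k}$, $R_{n,k}$ ($0\le k\le n$) as follows. For $n\ge k\ge0$: $L_{n+1,k+1}=L_{n+1,k}+L_{n,n-k}$ and $R_{n+1,k+1}=R_{n+1,k}+R_{n,n-k}$. The first entries of the rows are: $L_{2i,0}=a_{2i}$, $R_{2i+1,0}=a_{2i+1}$, $R_{2i,0}=L_{2i,2i}$, $L_{2i+1,0}=R_{2i+1,2i+1}$ for $i\ge0$ (so rows are computed in the order $L$ row $0$, $R$ row $0$, $R$ row $1$, $L$ row $1$, $L$ row $2$, $R$ row $2$, \dots). Then the middle sequence is $m_{2i}=L_{2i,2i}$, $m_{2i+1}=R_{2i+1,2i+1}$, and the transformed sequence is $b_{2i}=R_{2i,2i}$, $b_{2i+1}=L_{2i+1,2i+1}$. (For example, $\mathbf a=(1,1,1,\ldots)$ gives $\mathbf b=(1,3,9,35,177,\ldots)$.) *)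

theory Defs
  imports "HOL-Computational_Algebra.Formal_Power_Series"
begin

text \<open>Row n+1 of a triangular array, given its first entry s and the previous row prev (row n):
  row(0) = s, row(k+1) = row(k) + prev(n-k).\<close>
fun next_row :: "int \<Rightarrow> (nat \<Rightarrow> int) \<Rightarrow> nat \<Rightarrow> nat \<Rightarrow> int" where
  "next_row s prev n 0 = s"
| "next_row s prev n (Suc k) = next_row s prev n k + prev (n - k)"

text \<open>ox_rows a n = (row n of L, row n of R), computed in the order
  L0, R0, R1, L1, L2, R2, ...\<close>
fun ox_rows :: "(nat \<Rightarrow> int) \<Rightarrow> nat \<Rightarrow> (nat \<Rightarrow> int) \<times> (nat \<Rightarrow> int)" where
  "ox_rows a 0 = ((\<lambda>k. a 0), (\<lambda>k. a 0))"
| "ox_rows a (Suc n) =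
     (let (l, r) = ox_rows a n in
      if even (Suc n) then
        (let l' = next_row (a (Suc n)) l n in (l', next_row (l' (Suc n)) r n))
      else
        (let r' = next_row (a (Suc n)) r n in (next_row (r' (Suc n)) l n, r')))"

definition ox_L :: "(nat \<Rightarrow> int) \<Rightarrow> nat \<Rightarrow> nat \<Rightarrow> int" where
  "ox_L a n k = fst (ox_rows a n) k"

definition ox_R :: "(nat \<Rightarrow> int) \<Rightarrow> nat \<Rightarrow> nat \<Rightarrow> int" where
  "ox_R a n k = snd (ox_rows a n) k"

definition ox_middle :: "(nat \<Rightarrow> int) \<Rightarrow> nat \<Rightarrow> int" where
  "ox_middle a n = (if even n then ox_L a n n else ox_R a n n)"

definition ox_transform :: "(nat \<Rightarrow> int) \<Rightarrow> nat \<Rightarrow> int" where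
  "ox_transform a n = (if even n then ox_R a n n else ox_L a n n)"

definition egf :: "(nat \<Rightarrow> int) \<Rightarrow> real fps" where
  "egf a = Abs_fps (\<lambda>n. of_int (a n) / fact n)"

end

theory Submission
  imports Defs
begin

unbundle fps_syntax

definition cc :: "nat \<Rightarrow> real" where
  "cc j = (if even j then (- 1) ^ (j div 2) else 0)"
definition ss :: "nat \<Rightarrow> real" where
  "ss j = (if even j then 0 else (- 1) ^ ((j - 1) div 2))"

lemma cc_Suc: "cc (Suc j) = - ss j"
proof (cases "even j")
  case True
  then show ?thesis by (simp add: cc_def ss_def)
next
  case False
  then obtain i where "j = 2*i+1" by (meson oddE)
  then show ?thesis by (simp add: cc_def ss_def)
qed

lemma ss_Suc: "ss (Suc j) = cc j"
proof (cases "even j")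
  case True
  then obtain i where "j = 2*i" by (meson evenE)
  then show ?thesis by (simp add: cc_def ss_def)
next
  case False
  then show ?thesis by (simp add: cc_def ss_def)
qed

lemma cc0[simp]: "cc 0 = 1" and ss0[simp]: "ss 0 = 0"
  by (simp_all add: cc_def ss_def)

lemma cos_nth: "fps_cos (1::real) $ j = cc j / fact j"
  by (simp add: fps_cos_def cc_def)
lemma sin_nth: "fps_sin (1::real) $ j = ss j / fact j"
  by (simp add: fps_sin_def ss_def)

definition TT :: "(nat \<Rightarrow> real) \<Rightarrow> (nat \<Rightarrow> real) \<Rightarrow> nat \<Rightarrow> nat \<Rightarrow> real" where
  "TT p q n k = (\<Sum>j\<le>k. of_nat (k choose j) * (cc j * p (n - j) + ss j * q (n - j)))"

lemma TT_0: "TT p q n 0 = p n"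
  by (simp add: TT_def)

lemma TT_neg: "TT (\<lambda>m. - p m) (\<lambda>m. - q m) n k = - TT p q n k"
  by (simp add: TT_def sum_negf[symmetric] algebra_simps)

lemma TT_pascal:
  "TT p q (Suc n) (Suc k) = TT p q (Suc n) k + TT q (\<lambda>m. - p m) n k"
proof -
  have "TT p q (Suc n) (Suc k) =
     (\<Sum>j\<le>Suc k. of_nat (k choose j) * (cc j * p (Suc n - j) + ss j * q (Suc n - j)))
   + (\<Sum>j\<le>Suc k. of_nat (if j = 0 then 0 else k choose (j - 1)) * (cc j * p (Suc n - j) + ss j * q (Suc n - j)))"
    unfolding TT_def sum.distrib[symmetric]
  proof (intro sum.cong refl)
    fix j assume "j \<in> {..Suc k}"
    show "of_nat (Suc k choose j) * (cc j * p (Suc n - j) + ss j * q (Suc n - j)) =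
      of_nat (k choose j) * (cc j * p (Suc n - j) + ss j * q (Suc n - j)) +
      of_nat (if j = 0 then 0 else k choose (j - 1)) * (cc j * p (Suc n - j) + ss j * q (Suc n - j))"
      by (cases j) (simp_all add: algebra_simps)
  qed
  also have "(\<Sum>j\<le>Suc k. of_nat (k choose j) * (cc j * p (Suc n - j) + ss j * q (Suc n - j)))
      = TT p q (Suc n) k"
    by (simp add: TT_def)
  also have "(\<Sum>j\<le>Suc k. of_nat (if j = 0 then 0 else k choose (j - 1)) * (cc j * p (Suc n - j) + ss j * q (Suc n - j)))
      = TT q (\<lambda>m. - p m) n k"
    unfolding TT_def sum.atMost_Suc_shift by (simp add: cc_Suc ss_Suc algebra_simps)
  finally show ?thesis .
qed

lemma TT_sym_aux:
  assumes hyp: "\<And>n. TT q (\<lambda>m. - p m) n n = p n"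
  shows "\<forall>k l. k + l = n \<longrightarrow> TT p q (k + l) k = TT q (\<lambda>m. - p m) (k + l) l"
proof (induction n rule: less_induct)
  case (less n)
  have "TT p q (k + l) k = TT q (\<lambda>m. - p m) (k + l) l" if "k + l = n" for k l
    using that
  proof (induction k arbitrary: l)
    case 0
    then show ?case using hyp[of l] by (simp add: TT_0)
  next
    case (Suc k l)
    have A: "TT p q (Suc (k + l)) (Suc k) = TT p q (Suc (k + l)) k + TT q (\<lambda>m. - p m) (k + l) k"
      by (rule TT_pascal)
    have B: "TT q (\<lambda>m. - p m) (Suc (k + l)) (Suc l) = TT q (\<lambda>m. - p m) (Suc (k + l)) l - TT p q (k + l) l"
      using TT_pascal[of q "\<lambda>m. - p m" "k + l" l] TT_neg[of p q "k + l" l] by simp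
    have C: "TT p q (k + Suc l) k = TT q (\<lambda>m. - p m) (k + Suc l) (Suc l)"
      using Suc by simp
    have D: "TT p q (l + k) l = TT q (\<lambda>m. - p m) (l + k) k"
      using less Suc by auto
    show ?case using A B C D by (simp add: add.commute)
  qed
  then show ?case by blast
qed

lemma TT_sym:
  assumes hyp: "\<And>n. TT q (\<lambda>m. - p m) n n = p n"
  shows "TT p q (k + l) k = TT q (\<lambda>m. - p m) (k + l) l"
  using TT_sym_aux[OF hyp] by blast

definition mkf :: "(nat \<Rightarrow> real) \<Rightarrow> real fps" where
  "mkf p = Abs_fps (\<lambda>n. p n / fact n)"

definition HH :: "real fps" where
  "HH = (1 + fps_sin 1) / fps_cos 1"

definition qof :: "(nat \<Rightarrow> real) \<Rightarrow> nat \<Rightarrow> real" where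
  "qof p n = fact n * (mkf p * HH) $ n"

lemma mkf_qof: "mkf (qof p) = mkf p * HH"
  by (simp add: mkf_def qof_def fps_eq_iff)

lemma cos_mkf: "fps_cos 1 = mkf cc"
  by (simp add: mkf_def fps_eq_iff cos_nth)
lemma sin_mkf: "fps_sin 1 = mkf ss"
  by (simp add: mkf_def fps_eq_iff sin_nth)

lemma HH_cos: "HH * fps_cos 1 = 1 + fps_sin 1"
proof -
  have "HH = (1 + fps_sin 1) * inverse (fps_cos (1::real))"
    unfolding HH_def by (rule fps_divide_unit) simp
  moreover have "inverse (fps_cos (1::real)) * fps_cos 1 = 1"
    by (rule inverse_mult_eq_1) simp
  ultimately show ?thesis by (metis mult.assoc mult.right_neutral)
qed

lemma mkf_conv:
  "fact n * (mkf f * mkf g) $ n = (\<Sum>j\<le>n. of_nat (n choose j) * (f j * g (n - j)))"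
proof -
  have "fact n * (mkf f * mkf g) $ n = (\<Sum>j=0..n. fact n * (f j / fact j * (g (n - j) / fact (n - j))))"
    by (simp add: fps_mult_nth mkf_def sum_distrib_left)
  also have "\<dots> = (\<Sum>j\<le>n. of_nat (n choose j) * (f j * g (n - j)))"
    by (rule sum.cong) (auto simp: binomial_fact atLeast0AtMost)
  finally show ?thesis .
qed

lemma mkf_diff: "mkf (\<lambda>n. f n - g n) = mkf f - mkf g"
  by (simp add: mkf_def fps_eq_iff diff_divide_distrib)

lemma hyp_qof: "TT (qof p) (\<lambda>m. - p m) n n = p n"
proof -
  have "TT (qof p) (\<lambda>m. - p m) n n = fact n * (mkf cc * mkf (qof p) - mkf ss * mkf p) $ n"
    unfolding TT_def fps_sub_nth right_diff_distrib mkf_conv sum_subtractf[symmetric]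
    by (intro sum.cong refl) (simp add: algebra_simps)
  also have "mkf cc * mkf (qof p) - mkf ss * mkf p = mkf p"
  proof -
    have "mkf cc * (mkf p * HH) = mkf p * (HH * mkf cc)" by (simp only: mult_ac)
    also have "HH * mkf cc = 1 + mkf ss" using HH_cos by (simp add: cos_mkf sin_mkf)
    finally show ?thesis unfolding mkf_qof by (simp add: distrib_left mult.commute)
  qed
  finally show ?thesis by (simp add: mkf_def)
qed

lemma TT_rec:
  assumes "k \<le> n"
  shows "TT p (qof p) (Suc n) (Suc k) = TT p (qof p) (Suc n) k + TT p (qof p) n (n - k)"
  using TT_pascal[of p "qof p" n k] TT_sym[OF hyp_qof, of p "n - k" k] assms by simp

lemma TT_diag: "TT p (qof p) n n = qof p n"
  using TT_sym[OF hyp_qof, of p n 0] by (simp add: TT_0)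

lemma alg:
  fixes u v u' v' A A' h g c s M B :: "'a::comm_ring_1"
  assumes e1: "2*u = A + A' + (v*h - v'*g)" and e1': "2*u' = A' + A + (v'*g - v*h)"
   and e2: "2*v = A - A' + (u*h + u'*g)" and e2': "2*v' = A' - A + (u'*g + u*h)"
   and hc: "h*c = 1+s" and gc: "g*c = 1 - s" and eM: "2*M = u*h+u'*g+v*h-v'*g"
   and eB: "2*B = v*h+v'*g+u*h-u'*g" and cs: "c*c+s*s=1"
  shows "4*(M*(c-s)) = 4*A" "8*(B*(c-s)*c) = 8*(A*(c+s)*c)"
proof -
  define X where "X = u*h+u'*g"
  define Y where "Y = v*h-v'*g"
  have s1: "2*X = (A+A')*(h+g) + Y*(h-g)"
  proof -
    have "2*X = (2*u)*h + (2*u')*g" by (simp add: X_def algebra_simps)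
    also have "\<dots> = (A+A'+Y)*h + (A'+A-Y)*g" by (simp only: e1 e1' Y_def) (simp add: algebra_simps)
    finally show ?thesis by (simp add: algebra_simps)
  qed
  have s2: "2*Y = (A-A')*(h+g) + X*(h-g)"
  proof -
    have "2*Y = (2*v)*h - (2*v')*g" by (simp add: Y_def algebra_simps)
    also have "\<dots> = (A-A'+X)*h - (A'-A+X)*g" by (simp only: e2 e2' X_def) (simp add: algebra_simps)
    finally show ?thesis by (simp add: algebra_simps)
  qed
  have s3: "2*(X+Y) = 2*A*(h+g) + (X+Y)*(h-g)"
  proof -
    have "2*(X+Y) = 2*X + 2*Y" by (simp add: algebra_simps)
    also have "\<dots> = 2*A*(h+g) + (X+Y)*(h-g)" unfolding s1 s2 by (simp add: algebra_simps)
    finally show ?thesis .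
  qed
  have ec: "(h+g)*c = 2" using hc gc by (simp add: algebra_simps)
  have dc: "(h-g)*c = 2*s" using hc gc by (simp add: algebra_simps)
  have s4: "2*(X+Y)*c = 4*A + (X+Y)*(2*s)"
  proof -
    have "2*(X+Y)*c = 2*A*((h+g)*c) + (X+Y)*((h-g)*c)" using s3
      by (metis (no_types, lifting) distrib_right mult.assoc)
    then show ?thesis by (simp only: ec dc) (simp add: algebra_simps)
  qed
  have MXY: "2*M = X+Y" using eM by (simp add: X_def Y_def algebra_simps)
  show "4*(M*(c-s)) = 4*A"
  proof -
    have "4*(M*(c-s)) = (2*M)*(2*c) - (2*M)*(2*s)" by (simp add: algebra_simps)
    also have "\<dots> = 4*A" using s4 unfolding MXY by (simp add: algebra_simps)
    finally show ?thesis .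
  qed
  have uh: "2*(u*h - u'*g) = (A+A')*(h-g) + Y*(h+g)"
  proof -
    have "2*(u*h - u'*g) = (2*u)*h - (2*u')*g" by (simp add: algebra_simps)
    also have "\<dots> = (A+A'+Y)*h - (A'+A-Y)*g" by (simp only: e1 e1' Y_def) (simp add: algebra_simps)
    finally show ?thesis by (simp add: algebra_simps)
  qed
  have vh: "2*(v*h + v'*g) = (A-A')*(h-g) + X*(h+g)"
  proof -
    have "2*(v*h + v'*g) = (2*v)*h + (2*v')*g" by (simp add: algebra_simps)
    also have "\<dots> = (A-A'+X)*h + (A'-A+X)*g" by (simp only: e2 e2' X_def) (simp add: algebra_simps)
    finally show ?thesis by (simp add: algebra_simps)
  qed
  have B4: "4*B = 2*A*(h-g) + (X+Y)*(h+g)"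
  proof -
    have "4*B = 2*(2*B)" by simp
    also have "\<dots> = 2*(v*h + v'*g) + 2*(u*h - u'*g)" unfolding eB by (simp add: algebra_simps)
    finally show ?thesis unfolding uh vh by (simp add: algebra_simps)
  qed
  have M4: "4*(M*(c-s)) = 4*A" by fact
  have "4*B*c = 2*A*((h-g)*c) + (X+Y)*((h+g)*c)" unfolding B4 by (simp add: algebra_simps)
  also have "\<dots> = 4*A*s + 2*(X+Y)" unfolding ec dc by (simp add: algebra_simps)
  finally have B5: "4*B*c = 4*A*s + 4*M" unfolding MXY[symmetric] by (simp add: algebra_simps)
  have "8*(B*(c-s)*c) = 2*(4*B*c)*(c-s)" by (simp add: algebra_simps)
  also have "\<dots> = 8*A*s*(c-s) + 2*(4*(M*(c-s)))" unfolding B5 by (simp add: algebra_simps)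
  also have "\<dots> = 8*A*s*(c-s) + 8*A*(c*c+s*s)" unfolding M4 cs by (simp add: algebra_simps)
  also have "\<dots> = 8*(A*(c+s)*c)" by (simp add: algebra_simps)
  finally show "8*(B*(c-s)*c) = 8*(A*(c+s)*c)" .
qed

definition rfl :: "real fps \<Rightarrow> real fps" where
  "rfl F = Abs_fps (\<lambda>n. (- 1) ^ n * F $ n)"

lemma rfl_mult: "rfl (F * G) = rfl F * rfl G"
proof (rule fps_ext)
  fix n
  have "rfl (F * G) $ n = (\<Sum>i=0..n. (- 1) ^ n * (F $ i * G $ (n - i)))"
    by (simp add: rfl_def fps_mult_nth sum_distrib_left)
  also have "\<dots> = (\<Sum>i=0..n. ((- 1) ^ i * F $ i) * ((- 1) ^ (n - i) * G $ (n - i)))"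
  proof (rule sum.cong[OF refl])
    fix i assume "i \<in> {0..n}"
    then have "(- 1 :: real) ^ n = (- 1) ^ i * (- 1) ^ (n - i)"
      by (simp add: power_add[symmetric])
    then show "(- 1) ^ n * (F $ i * G $ (n - i)) = ((- 1) ^ i * F $ i) * ((- 1) ^ (n - i) * G $ (n - i))"
      by (simp add: algebra_simps)
  qed
  also have "\<dots> = (rfl F * rfl G) $ n" by (simp add: rfl_def fps_mult_nth)
  finally show "rfl (F * G) $ n = (rfl F * rfl G) $ n" .
qed

lemma rfl_add: "rfl (F + G) = rfl F + rfl G"
  by (simp add: rfl_def fps_eq_iff algebra_simps)
lemma rfl_diff: "rfl (F - G) = rfl F - rfl G"
  by (simp add: rfl_def fps_eq_iff algebra_simps)
lemma rfl_1: "rfl 1 = 1"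
  by (simp add: rfl_def fps_eq_iff)
lemma rfl_rfl: "rfl (rfl F) = F"
  by (simp add: rfl_def fps_eq_iff)
lemma rfl_sin: "rfl (fps_sin 1) = - fps_sin 1"
  by (auto simp: rfl_def fps_eq_iff fps_sin_def)
lemma rfl_cos: "rfl (fps_cos 1) = fps_cos 1"
  by (auto simp: rfl_def fps_eq_iff fps_cos_def)

lemma mkf_parity:
  "2 * mkf (\<lambda>n. if even n then f n else g n)
     = mkf f + rfl (mkf f) + mkf g - rfl (mkf g)"
  by (auto simp: mkf_def rfl_def fps_eq_iff fps_numeral_fps_const)

lemma ox_L_0: "ox_L a 0 k = a 0" and ox_R_0: "ox_R a 0 k = a 0"
  by (simp_all add: ox_L_def ox_R_def)

lemma ox_L_fun: "ox_L a n = fst (ox_rows a n)" by (rule ext) (simp add: ox_L_def)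
lemma ox_R_fun: "ox_R a n = snd (ox_rows a n)" by (rule ext) (simp add: ox_R_def)

lemma ox_L_Suc: "ox_L a (Suc n) k = (if even (Suc n) then next_row (a (Suc n)) (ox_L a n) n k
    else next_row (ox_R a (Suc n) (Suc n)) (ox_L a n) n k)"
  by (cases "ox_rows a n") (simp add: ox_L_fun ox_R_fun Let_def del: next_row.simps)

lemma ox_R_Suc: "ox_R a (Suc n) k = (if even (Suc n) then next_row (ox_L a (Suc n) (Suc n)) (ox_R a n) n k
    else next_row (a (Suc n)) (ox_R a n) n k)"
  by (cases "ox_rows a n") (simp add: ox_L_fun ox_R_fun Let_def del: next_row.simps)

lemma next_row_TT:
  assumes "\<forall>k\<le>n. real_of_int (prev k) = TT p (qof p) n k" "p (Suc n) = real_of_int s"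
  shows "k \<le> Suc n \<Longrightarrow> real_of_int (next_row s prev n k) = TT p (qof p) (Suc n) k"
proof (induction k)
  case 0
  then show ?case using assms(2) by (simp add: TT_0)
next
  case (Suc k)
  then have "k \<le> n" by simp
  then show ?case using Suc assms(1) TT_rec[of k n p] by simp
qed

definition pL :: "(nat \<Rightarrow> int) \<Rightarrow> nat \<Rightarrow> real" where
  "pL a n = real_of_int (ox_L a n 0)"
definition pR :: "(nat \<Rightarrow> int) \<Rightarrow> nat \<Rightarrow> real" where
  "pR a n = real_of_int (ox_R a n 0)"

lemma rows:
  "\<forall>k\<le>n. real_of_int (ox_L a n k) = TT (pL a) (qof (pL a)) n k
         \<and> real_of_int (ox_R a n k) = TT (pR a) (qof (pR a)) n k"
proof (induction n)
  case 0
  then show ?case by (simp add: TT_0 pL_def pR_def ox_L_0 ox_R_0)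
next
  case (Suc n)
  have IL: "\<forall>k\<le>n. real_of_int (ox_L a n k) = TT (pL a) (qof (pL a)) n k" using Suc by blast
  have IR: "\<forall>k\<le>n. real_of_int (ox_R a n k) = TT (pR a) (qof (pR a)) n k" using Suc by blast
  show ?case
  proof (cases "even (Suc n)")
    case True
    have L: "real_of_int (ox_L a (Suc n) k) = TT (pL a) (qof (pL a)) (Suc n) k" if "k \<le> Suc n" for k
    proof -
      have "pL a (Suc n) = real_of_int (a (Suc n))" using True by (simp add: pL_def ox_L_Suc)
      from next_row_TT[OF IL this that] show ?thesis using True by (simp add: ox_L_Suc)
    qed
    have R: "real_of_int (ox_R a (Suc n) k) = TT (pR a) (qof (pR a)) (Suc n) k" if "k \<le> Suc n" for k
    proof -
      have "pR a (Suc n) = real_of_int (ox_L a (Suc n) (Suc n))" using True by (simp add: pR_def ox_R_Suc)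
      from next_row_TT[OF IR this that] show ?thesis using True by (simp add: ox_R_Suc)
    qed
    show ?thesis using L R by blast
  next
    case False
    have R: "real_of_int (ox_R a (Suc n) k) = TT (pR a) (qof (pR a)) (Suc n) k" if "k \<le> Suc n" for k
    proof -
      have "pR a (Suc n) = real_of_int (a (Suc n))" using False by (simp add: pR_def ox_R_Suc)
      from next_row_TT[OF IR this that] show ?thesis using False by (simp add: ox_R_Suc)
    qed
    have L: "real_of_int (ox_L a (Suc n) k) = TT (pL a) (qof (pL a)) (Suc n) k" if "k \<le> Suc n" for k
    proof -
      have "pL a (Suc n) = real_of_int (ox_R a (Suc n) (Suc n))" using False by (simp add: pL_def ox_L_Suc)
      from next_row_TT[OF IL this that] show ?thesis using False by (simp add: ox_L_Suc)
    qed
    show ?thesis using L R by blast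
  qed
qed

lemma diagL: "real_of_int (ox_L a n n) = qof (pL a) n"
  using rows[of n a] TT_diag by simp
lemma diagR: "real_of_int (ox_R a n n) = qof (pR a) n"
  using rows[of n a] TT_diag by simp

lemma pL_eq: "pL a n = (if even n then real_of_int (a n) else qof (pR a) n)"
proof (cases n)
  case 0 then show ?thesis by (simp add: pL_def ox_L_0)
next
  case (Suc m) then show ?thesis by (simp add: pL_def ox_L_Suc diagR[symmetric])
qed

lemma pR_eq: "pR a n = (if even n then qof (pL a) n else real_of_int (a n))"
proof (cases n)
  case 0 then show ?thesis by (simp add: pR_def ox_R_0 diagL[symmetric] ox_L_0)
next
  case (Suc m) then show ?thesis by (simp add: pR_def ox_R_Suc diagL[symmetric])
qed

lemma egf_mkf: "egf f = mkf (\<lambda>n. real_of_int (f n))"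
  by (simp add: egf_def mkf_def)

lemma div_unit_eq:
  fixes X Y D :: "real fps"
  assumes "D $ 0 \<noteq> 0" "X * D = Y"
  shows "X = Y / D"
proof -
  have "Y / D = X * (D * inverse D)" using assms by (simp add: fps_divide_unit mult.assoc)
  also have "D * inverse D = 1" using assms(1) by (rule inverse_mult_eq_1')
  finally show ?thesis by simp
qed

theorem theorem2:
  fixes a :: "nat \<Rightarrow> int"
  shows "egf (ox_middle a) = egf a / (fps_cos 1 - fps_sin 1)
       \<and> egf (ox_transform a) = (fps_cos 1 + fps_sin 1) / (fps_cos 1 - fps_sin 1) * egf a"
proof -
  define A where "A = egf a"
  define u where "u = mkf (pL a)"
  define v where "v = mkf (pR a)"
  define h where "h = HH"
  define g where "g = rfl HH"
  define c where "c = fps_cos (1::real)"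
  define s where "s = fps_sin (1::real)"
  define M where "M = egf (ox_middle a)"
  define B where "B = egf (ox_transform a)"
  have QL: "mkf (qof (pL a)) = u * h" by (simp add: mkf_qof u_def h_def)
  have QR: "mkf (qof (pR a)) = v * h" by (simp add: mkf_qof v_def h_def)
  have rQL: "rfl (u * h) = rfl u * g" by (simp add: rfl_mult g_def h_def)
  have rQR: "rfl (v * h) = rfl v * g" by (simp add: rfl_mult g_def h_def)
  have rg: "rfl g = h" by (simp add: g_def h_def rfl_rfl)
  have rh: "rfl h = g" by (simp add: g_def h_def)
  have r2: "rfl (2 * F) = 2 * rfl F" for F by (simp only: mult_2 rfl_add)
  have e1: "2*u = A + rfl A + (v*h - rfl v*g)"
  proof -
    have "u = mkf (\<lambda>n. if even n then real_of_int (a n) else qof (pR a) n)"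
      unfolding u_def by (rule arg_cong[where f=mkf]) (rule ext, rule pL_eq)
    then have "2*u = A + rfl A + mkf (qof (pR a)) - rfl (mkf (qof (pR a)))"
      by (simp add: mkf_parity A_def egf_mkf)
    then show ?thesis unfolding QR rQR by (simp add: algebra_simps)
  qed
  have e1': "2*rfl u = rfl A + A + (rfl v*g - v*h)"
  proof -
    have "2*rfl u = rfl (A + rfl A + (v*h - rfl v*g))" using e1 r2[of u] by metis
    then show ?thesis by (simp add: rfl_add rfl_diff rfl_mult rfl_rfl rg rh)
  qed
  have e2: "2*v = A - rfl A + (u*h + rfl u*g)"
  proof -
    have "v = mkf (\<lambda>n. if even n then qof (pL a) n else real_of_int (a n))"
      unfolding v_def by (rule arg_cong[where f=mkf]) (rule ext, rule pR_eq)
    then have "2*v = mkf (qof (pL a)) + rfl (mkf (qof (pL a))) + A - rfl A"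
      by (simp add: mkf_parity A_def egf_mkf)
    then show ?thesis unfolding QL rQL by (simp add: algebra_simps)
  qed
  have e2': "2*rfl v = rfl A - A + (rfl u*g + u*h)"
  proof -
    have "2*rfl v = rfl (A - rfl A + (u*h + rfl u*g))" using e2 r2[of v] by metis
    then show ?thesis by (simp add: rfl_add rfl_diff rfl_mult rfl_rfl rg rh)
  qed
  have hc: "h*c = 1 + s" using HH_cos by (simp add: h_def c_def s_def)
  have gc: "g*c = 1 - s"
  proof -
    have "rfl (h*c) = rfl (1 + s)" using hc by simp
    then show ?thesis by (simp add: rfl_mult rfl_add rfl_1 g_def h_def c_def s_def rfl_cos rfl_sin)
  qed
  have eM: "2*M = u*h + rfl u*g + v*h - rfl v*g"
  proof -
    have "M = mkf (\<lambda>n. if even n then qof (pL a) n else qof (pR a) n)"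
      unfolding M_def egf_mkf
      by (rule arg_cong[where f=mkf]) (rule ext, simp add: ox_middle_def diagL diagR)
    then have "2*M = mkf (qof (pL a)) + rfl (mkf (qof (pL a))) + mkf (qof (pR a)) - rfl (mkf (qof (pR a)))"
      by (simp add: mkf_parity)
    then show ?thesis unfolding QL QR rQL rQR by (simp add: algebra_simps)
  qed
  have eB: "2*B = v*h + rfl v*g + u*h - rfl u*g"
  proof -
    have "B = mkf (\<lambda>n. if even n then qof (pR a) n else qof (pL a) n)"
      unfolding B_def egf_mkf
      by (rule arg_cong[where f=mkf]) (rule ext, simp add: ox_transform_def diagL diagR)
    then have "2*B = mkf (qof (pR a)) + rfl (mkf (qof (pR a))) + mkf (qof (pL a)) - rfl (mkf (qof (pL a)))"
      by (simp add: mkf_parity)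
    then show ?thesis unfolding QL QR rQL rQR by (simp add: algebra_simps)
  qed
  have cs: "c*c + s*s = 1"
    using fps_sin_cos_sum_of_squares[of "1::real"] by (simp add: c_def s_def power2_eq_square)
  note res = alg[OF e1 e1' e2 e2' hc gc eM eB cs]
  have four: "(4::real fps) \<noteq> 0" and eight: "(8::real fps) \<noteq> 0"
    by (simp_all add: fps_numeral_fps_const)
  have M1: "M*(c-s) = A" using res(1) four by simp
  have c0: "c \<noteq> 0"
  proof
    assume "c = 0" then have "c $ 0 = 0" by simp then show False by (simp add: c_def)
  qed
  have "B*(c-s)*c = A*(c+s)*c" using res(2) eight by simp
  then have B1: "B*(c-s) = (c+s)*A" using c0 by (simp add: mult.commute)
  have d0: "(c - s) $ 0 \<noteq> 0" by (simp add: c_def s_def)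
  have "M = A / (c - s)" by (rule div_unit_eq[OF d0 M1])
  moreover have "B = (c+s)*A / (c-s)" by (rule div_unit_eq[OF d0 B1])
  moreover have "(c+s)*A / (c-s) = (c+s) / (c-s) * A"
    using d0 by (simp add: fps_divide_unit mult_ac)
  ultimately show ?thesis unfolding M_def B_def A_def c_def s_def by simp
qed

end
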